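(* Let $\tau$ be a $*$-stopping time. Then $\tau\wedge T\in L_G^{1^*}(\Omega)$ for each given $T>0$, and $\tau\in\mathcal{L}_G^{1^*_*}(\Omega)$.
   Context: $\Omega=C_0^d(\mathbb{R}^+)$ is the space of continuous paths $\omega:[0,\infty)\to\mathbb{R}^d$ with $\omega_0=0$, $B$ the canonical process, $\mathcal F_t=\sigma\{B_s:s\le t\}$, $\hat{\mathbb{E}}$ the $G$-expectation ($G$ a monotone sublinear function on $d\times d$ symmetric matrices). $L^1_G(\Omega)$ (resp. $L^1_G(\Omega_t)$) is the completion of bounded Lipschitz cylinder functions $\varphi(B_{t_1},\dots,B_{t_n})$ (resp. with $t_i\le t$) under $\hat{\mathbb{E}}[|\cdot|]$. $\mathcal{P}$ is a weakly compact set of probability measures representing $\hat{\mathbb{E}}$, $\hat{\mathbb{E}}[X]=\sup_{P\in\mathcal{P}}E_P[X]$ for Borel $X$, $c(A)=\sup_{P\in\mathcal{P}}P(A)$, q.s. = outside a capacity-zero set. $L^0(\Omega)$ (resp. $L^0(\Omega_t)$) are $\mathcal B(\Omega)$- (resp. $\mathcal F_t$-)measurable maps into $[-\infty,\infty]$; $\mathbb{L}^1(\cdot)$ those with $\hat{\mathbb{E}}[|X|]<\infty$. $L_G^{1^*}(\Omega)=\{X\in\mathbb{L}^1(\Omega):\exists X_n\in L^1_G(\Omega),X_n\downarrow X\text{ q.s.}\}$, $L_G^{1^*}(\Omega_t)=\{X\in\mathbb{L}^1(\Omega_t):\exists X_n\in L^1_G(\Omega_t),X_n\downarrow X\text{ q.s.}\}$;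 $\mathcal{L}_G^{1^*_*}(\Omega)=\{X\in L^0(\Omega):\exists X_n\in L_G^{1^*}(\Omega),X_n\uparrow X\text{ q.s.}\}$. A random time $\tau:\Omega\to[0,\infty)$ is a $*$-stopping time if $I_{\{\tau\ge t\}}\in L_G^{1^*}(\Omega_t)$ for each $t\ge0$. *)

theory Defs
  imports "HOL-Probability.Probability"
begin

text \<open>Paths \<open>\<omega> : [0,\<infinity>) \<rightarrow> R^d\<close>; represented as total functions on real,
  extended by 0 for negative times so that the representation is unique.\<close>
type_synonym 'd path = "real \<Rightarrow> real^'d"

definition Omega :: "'d::finite path set" where
  "Omega = {\<omega>. continuous_on {0..} \<omega> \<and> \<omega> 0 = 0 \<and> (\<forall>t<0. \<omega> t = 0)}"

definition canon :: "real \<Rightarrow> 'd::finite path \<Rightarrow> real^'d" where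
  "canon t \<omega> = \<omega> t"

text \<open>\<open>Filt S\<close>: the measurable space \<open>(\<Omega>, \<sigma>{B_s : s \<in> S})\<close>.
  \<open>F_t = Filt {0..t}\<close>, \<open>B(\<Omega>) = Filt {0..}\<close> (the Borel sets of \<Omega> coincide with
  the sigma-algebra generated by the coordinate maps).\<close>
definition Filt :: "real set \<Rightarrow> 'd::finite path measure" where
  "Filt S = sigma Omega {canon s -` A \<inter> Omega | s A. s \<in> S \<and> A \<in> sets borel}"

definition rep_family :: "'d::finite path measure set \<Rightarrow> bool" where
  "rep_family PP \<longleftrightarrow> PP \<noteq> {} \<and>
     (\<forall>P\<in>PP. prob_space P \<and> sets P = sets (Filt {0..}) \<and> space P = Omega)"

definition Ehat_abs :: "'d::finite path measure set \<Rightarrow> ('d path \<Rightarrow> ereal) \<Rightarrow> ennreal" where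
  "Ehat_abs PP X = (SUP P\<in>PP. \<integral>\<^sup>+ \<omega>. e2ennreal \<bar>X \<omega>\<bar> \<partial>P)"

definition cap :: "'d::finite path measure set \<Rightarrow> 'd path set \<Rightarrow> ennreal" where
  "cap PP A = (SUP P\<in>PP. emeasure P A)"

definition qs :: "'d::finite path measure set \<Rightarrow> ('d path \<Rightarrow> bool) \<Rightarrow> bool" where
  "qs PP Q \<longleftrightarrow> (\<exists>N \<in> sets (Filt {0..}). cap PP N = 0 \<and> (\<forall>\<omega>\<in>Omega - N. Q \<omega>))"

definition lip_cyl :: "real set \<Rightarrow> ('d::finite path \<Rightarrow> real) set" where
  "lip_cyl S = {X. \<exists>(ts::real list) (\<phi>::(real^'d) list \<Rightarrow> real) C L.
      set ts \<subseteq> S \<and>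
      (\<forall>xs. length xs = length ts \<longrightarrow> \<bar>\<phi> xs\<bar> \<le> C) \<and>
      (\<forall>xs ys. length xs = length ts \<longrightarrow> length ys = length ts \<longrightarrow>
          \<bar>\<phi> xs - \<phi> ys\<bar> \<le> L * (\<Sum>i<length ts. norm (xs!i - ys!i))) \<and>
      (\<forall>\<omega>\<in>Omega. X \<omega> = \<phi> (map (\<lambda>s. canon s \<omega>) ts))}"

definition L0 :: "real set \<Rightarrow> ('d::finite path \<Rightarrow> ereal) set" where
  "L0 S = borel_measurable (Filt S)"

definition LL1 :: "'d::finite path measure set \<Rightarrow> real set \<Rightarrow> ('d path \<Rightarrow> ereal) set" where
  "LL1 PP S = {X \<in> L0 S. Ehat_abs PP X < \<infinity>}"

text \<open>\<open>L^1_G\<close> (with cylinder times in S): the completion of \<open>lip_cyl S\<close> under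
  \<open>\<hat>E[|\<cdot>|]\<close>, realised inside \<open>L^0(\<Omega>)\<close>.\<close>
definition L1G :: "'d::finite path measure set \<Rightarrow> real set \<Rightarrow> ('d path \<Rightarrow> ereal) set" where
  "L1G PP S = {X \<in> L0 {0..}. \<exists>Xn. (\<forall>n. Xn n \<in> lip_cyl S) \<and>
      (\<lambda>n. Ehat_abs PP (\<lambda>\<omega>. X \<omega> - ereal (Xn n \<omega>))) \<longlonglongrightarrow> 0}"

definition dec_qs :: "'d::finite path measure set \<Rightarrow> (nat \<Rightarrow> 'd path \<Rightarrow> ereal) \<Rightarrow> ('d path \<Rightarrow> ereal) \<Rightarrow> bool" where
  "dec_qs PP Xn X \<longleftrightarrow> qs PP (\<lambda>\<omega>. (\<forall>n. Xn (Suc n) \<omega> \<le> Xn n \<omega>) \<and> (\<lambda>n. Xn n \<omega>) \<longlonglongrightarrow> X \<omega>)"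

definition inc_qs :: "'d::finite path measure set \<Rightarrow> (nat \<Rightarrow> 'd path \<Rightarrow> ereal) \<Rightarrow> ('d path \<Rightarrow> ereal) \<Rightarrow> bool" where
  "inc_qs PP Xn X \<longleftrightarrow> qs PP (\<lambda>\<omega>. (\<forall>n. Xn n \<omega> \<le> Xn (Suc n) \<omega>) \<and> (\<lambda>n. Xn n \<omega>) \<longlonglongrightarrow> X \<omega>)"

definition L1G_star :: "'d::finite path measure set \<Rightarrow> real set \<Rightarrow> ('d path \<Rightarrow> ereal) set" where
  "L1G_star PP S = {X \<in> LL1 PP S. \<exists>Xn. (\<forall>n. Xn n \<in> L1G PP S) \<and> dec_qs PP Xn X}"

definition L1G_starstar :: "'d::finite path measure set \<Rightarrow> ('d path \<Rightarrow> ereal) set" where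
  "L1G_starstar PP = {X \<in> L0 {0..}. \<exists>Xn. (\<forall>n. Xn n \<in> L1G_star PP {0..}) \<and> inc_qs PP Xn X}"

definition star_stopping_time :: "'d::finite path measure set \<Rightarrow> ('d path \<Rightarrow> real) \<Rightarrow> bool" where
  "star_stopping_time PP \<tau> \<longleftrightarrow> (\<forall>\<omega>\<in>Omega. 0 \<le> \<tau> \<omega>) \<and>
     (\<forall>t\<ge>0. (\<lambda>\<omega>. if t \<le> \<tau> \<omega> then (1::ereal) else 0) \<in> L1G_star PP {0..t})"

end

theory Submission
  imports Defs
begin
lemma space_Filt: "space (Filt S) = Omega"
  unfolding Filt_def by (rule space_measure_of) auto
lemma sets_Filt: "sets (Filt S) = sigma_sets Omega {canon s -` A \<inter> Omega | s A. s \<in> S \<and> A \<in> sets borel}"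
  unfolding Filt_def by (rule sets_measure_of) auto
lemma sets_Filt_mono: "S \<subseteq> S' \<Longrightarrow> sets (Filt S) \<subseteq> sets (Filt S')"
  unfolding sets_Filt by (auto intro!: sigma_sets_mono' )
lemma L0_mono: "S \<subseteq> S' \<Longrightarrow> L0 S \<subseteq> L0 S'"
  unfolding L0_def by (rule measurable_mono) (auto simp: space_Filt sets_Filt_mono)

lemma coord_meas: "(\<lambda>\<omega>. \<omega> s) \<in> borel_measurable (Filt {0..})"
proof (cases "0 \<le> s")
  case True
  show ?thesis
  proof (rule measurableI)
    fix A :: "(real^'a) set" assume "A \<in> sets borel"
    then have "canon s -` A \<inter> Omega \<in> sets (Filt {0..})"
      unfolding sets_Filt using True by (intro sigma_sets.Basic) blast
    then show "(\<lambda>\<omega>. \<omega> s) -` A \<inter> space (Filt {0..}) \<in> sets (Filt {0..})"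
      by (simp add: space_Filt canon_def[abs_def])
  qed auto
next
  case False
  then have "\<And>\<omega>. \<omega> \<in> space (Filt {0..}) \<Longrightarrow> \<omega> s = (0::real^'a)"
    by (auto simp: space_Filt Omega_def)
  then show ?thesis by (subst measurable_cong[where g="\<lambda>_. 0"]) auto
qed

lemma coord_meas'[measurable]: "(\<lambda>\<omega>. \<omega> s $ i) \<in> borel_measurable (Filt {0..})"
  by (rule measurable_compose[OF coord_meas]) (intro borel_measurable_continuous_onI continuous_intros)

definition rnd :: "nat \<Rightarrow> real list \<Rightarrow> 'd::finite path \<Rightarrow> ('d \<Rightarrow> int) list" where
  "rnd k ts \<omega> = map (\<lambda>s. (\<lambda>i. \<lfloor>real k * (\<omega> s $ i)\<rfloor>)) ts"

lemma rnd_meas: "rnd k ts \<in> measurable (Filt {0..}) (count_space UNIV)"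
proof (subst measurable_count_space_eq2_countable, safe)
  fix a :: "('d::finite \<Rightarrow> int) list"
  have "rnd k ts -` {a} \<inter> space (Filt {0..}) = {\<omega> \<in> space (Filt {0..}). length a = length ts \<and>
     (\<forall>j<length ts. \<forall>i. \<lfloor>real k * (\<omega> (ts!j) $ i)\<rfloor> = (a!j) i)}"
    by (auto simp: rnd_def list_eq_iff_nth_eq)
  also have "\<dots> \<in> sets (Filt {0..})"
    by measurable
  finally show "rnd k ts -` {a} \<inter> space (Filt {0..}) \<in> sets (Filt {0..})" .
qed simp

lemma floor_approx: "m > 0 \<Longrightarrow> \<bar>real_of_int \<lfloor>m * x\<rfloor> / m - x\<bar> \<le> 1 / m" for m x :: real
proof -
  assume m: "m > 0"
  have a: "real_of_int \<lfloor>m * x\<rfloor> \<le> m * x" "m * x < real_of_int \<lfloor>m * x\<rfloor> + 1"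
    by linarith+
  have "real_of_int \<lfloor>m * x\<rfloor> / m \<le> x" using a m by (simp add: divide_le_eq mult.commute)
  moreover have "(m*x - 1)/m < real_of_int \<lfloor>m * x\<rfloor> / m" using a m
    by (intro divide_strict_right_mono) auto
  moreover have "(m*x - 1)/m = x - 1/m" using m by (simp add: field_simps)
  ultimately show ?thesis by simp
qed

definition dec :: "nat \<Rightarrow> ('d::finite \<Rightarrow> int) \<Rightarrow> real^'d" where
  "dec k a = (\<chi> i. real_of_int (a i) / real k)"

lemma dec_rnd_close: "k > 0 \<Longrightarrow> norm (dec k (\<lambda>i. \<lfloor>real k * (x $ i)\<rfloor>) - x) \<le> real CARD('d) / real k"
  for x :: "real^'d::finite"
proof -
  assume k: "k > 0"
  have "norm (dec k (\<lambda>i. \<lfloor>real k * (x $ i)\<rfloor>) - x) \<le> (\<Sum>i\<in>UNIV. \<bar>(dec k (\<lambda>i. \<lfloor>real k * (x $ i)\<rfloor>) - x) $ i\<bar>)"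
    by (rule norm_le_l1_cart)
  also have "\<dots> \<le> (\<Sum>i\<in>(UNIV::'d set). 1 / real k)"
    using floor_approx[of "real k"] k by (intro sum_mono) (simp add: dec_def)
  also have "\<dots> = real CARD('d) / real k" by simp
  finally show ?thesis .
qed

lemma lip_cyl_meas:
  fixes f :: "'d::finite path \<Rightarrow> real"
  assumes "f \<in> lip_cyl S"
  shows "f \<in> borel_measurable (Filt {0..})"
proof -
  obtain ts \<phi> C L where len: "\<forall>xs. length xs = length ts \<longrightarrow> \<bar>\<phi> xs\<bar> \<le> C"
    and lip: "\<forall>xs ys. length xs = length ts \<longrightarrow> length ys = length ts \<longrightarrow>
          \<bar>\<phi> xs - \<phi> ys\<bar> \<le> L * (\<Sum>i<length ts. norm (xs!i - ys!i))"
    and rep: "\<forall>\<omega>\<in>Omega. f \<omega> = \<phi> (map (\<lambda>s. canon s \<omega>) ts)"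
    using assms unfolding lip_cyl_def by blast
  define g where "g k \<omega> = \<phi> (map (dec (Suc k)) (rnd (Suc k) ts \<omega>))" for k \<omega>
  have gm: "g k \<in> borel_measurable (Filt {0..})" for k
    unfolding g_def by (rule measurable_compose[OF rnd_meas]) simp
  have conv: "(\<lambda>k. g k \<omega>) \<longlonglongrightarrow> f \<omega>" if "\<omega> \<in> space (Filt {0..})" for \<omega>
  proof -
    have fw: "f \<omega> = \<phi> (map (\<lambda>s. canon s \<omega>) ts)" using rep that by (simp add: space_Filt)
    let ?c = "\<bar>L\<bar> * (real (length ts) * real CARD('d))"
    have b: "norm (g k \<omega> - f \<omega>) \<le> ?c / real (Suc k)" for k
    proof -
      have "norm (g k \<omega> - f \<omega>) \<le> L * (\<Sum>i<length ts. norm (map (dec (Suc k)) (rnd (Suc k) ts \<omega>) ! i - map (\<lambda>s. canon s \<omega>) ts ! i))"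
        unfolding g_def fw real_norm_def by (rule lip[rule_format]) (simp_all add: rnd_def)
      also have "\<dots> \<le> \<bar>L\<bar> * (\<Sum>i<length ts. norm (map (dec (Suc k)) (rnd (Suc k) ts \<omega>) ! i - map (\<lambda>s. canon s \<omega>) ts ! i))"
        by (intro mult_right_mono sum_nonneg) auto
      also have "\<dots> \<le> \<bar>L\<bar> * (\<Sum>i<length ts. real CARD('d) / real (Suc k))"
        using dec_rnd_close[of "Suc k"]
        by (intro mult_left_mono sum_mono) (auto simp: rnd_def canon_def)
      also have "\<dots> = ?c / real (Suc k)" by simp
      finally show ?thesis .
    qed
    have "(\<lambda>k. g k \<omega> - f \<omega>) \<longlonglongrightarrow> 0"
    proof (rule Lim_null_comparison)
      show "\<forall>\<^sub>F k in sequentially. norm (g k \<omega> - f \<omega>) \<le> ?c / real (Suc k)" using b by simp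
      show "(\<lambda>k. ?c / real (Suc k)) \<longlonglongrightarrow> 0"
        using LIMSEQ_Suc[OF lim_const_over_n[of ?c]] by simp
    qed
    then have "(\<lambda>k. (g k \<omega> - f \<omega>) + f \<omega>) \<longlonglongrightarrow> 0 + f \<omega>" by (intro tendsto_add) auto
    then show ?thesis by simp
  qed
  show ?thesis by (rule borel_measurable_LIMSEQ_real[OF conv gm])
qed
lemma sum_split_nat: "(\<Sum>i<n1+n2. f i) = (\<Sum>i<n1. f i) + (\<Sum>i<n2. f (n1+i))"
  for f :: "nat \<Rightarrow> real"
  by (induct n2) auto

lemma lip_cyl_binop:
  fixes f g :: "'d::finite path \<Rightarrow> real" and Fr :: "real \<Rightarrow> real \<Rightarrow> real"
  assumes "f \<in> lip_cyl S" "g \<in> lip_cyl S" "c \<ge> 0"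
    and FL: "\<And>a b a' b'. \<bar>Fr a b - Fr a' b'\<bar> \<le> c * (\<bar>a - a'\<bar> + \<bar>b - b'\<bar>)"
  shows "(\<lambda>\<omega>. Fr (f \<omega>) (g \<omega>)) \<in> lip_cyl S"
proof -
  obtain ts1 \<phi>1 C1 L1 where S1: "set ts1 \<subseteq> S" and B1: "\<forall>xs. length xs = length ts1 \<longrightarrow> \<bar>\<phi>1 xs\<bar> \<le> C1"
    and lip1: "\<forall>xs ys. length xs = length ts1 \<longrightarrow> length ys = length ts1 \<longrightarrow>
          \<bar>\<phi>1 xs - \<phi>1 ys\<bar> \<le> L1 * (\<Sum>i<length ts1. norm (xs!i - ys!i))"
    and rep1: "\<forall>\<omega>\<in>Omega. f \<omega> = \<phi>1 (map (\<lambda>s. canon s \<omega>) ts1)"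
    using assms(1) unfolding lip_cyl_def by blast
  obtain ts2 \<phi>2 C2 L2 where S2: "set ts2 \<subseteq> S" and B2: "\<forall>xs. length xs = length ts2 \<longrightarrow> \<bar>\<phi>2 xs\<bar> \<le> C2"
    and lip2: "\<forall>xs ys. length xs = length ts2 \<longrightarrow> length ys = length ts2 \<longrightarrow>
          \<bar>\<phi>2 xs - \<phi>2 ys\<bar> \<le> L2 * (\<Sum>i<length ts2. norm (xs!i - ys!i))"
    and rep2: "\<forall>\<omega>\<in>Omega. g \<omega> = \<phi>2 (map (\<lambda>s. canon s \<omega>) ts2)"
    using assms(2) unfolding lip_cyl_def by blast
  define n1 where "n1 = length ts1"
  define n2 where "n2 = length ts2"
  define \<phi> where "\<phi> xs = Fr (\<phi>1 (take n1 xs)) (\<phi>2 (drop n1 xs))" for xs :: "(real^'d) list"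
  define M where "M = max (max L1 L2) 0"
  have "set (ts1 @ ts2) \<subseteq> S" using S1 S2 by auto
  moreover have "\<forall>xs. length xs = length (ts1@ts2) \<longrightarrow> \<bar>\<phi> xs\<bar> \<le> \<bar>Fr 0 0\<bar> + c * (C1 + C2)"
  proof (intro allI impI)
    fix xs :: "(real^'d) list" assume l: "length xs = length (ts1@ts2)"
    have "\<bar>\<phi> xs - Fr 0 0\<bar> \<le> c * (\<bar>\<phi>1 (take n1 xs)\<bar> + \<bar>\<phi>2 (drop n1 xs)\<bar>)"
      using FL[of "\<phi>1 (take n1 xs)" "\<phi>2 (drop n1 xs)" 0 0] by (simp add: \<phi>_def)
    also have "\<dots> \<le> c * (C1 + C2)"
      using B1 B2 l assms(3) by (intro mult_left_mono add_mono) (auto simp: n1_def)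
    finally show "\<bar>\<phi> xs\<bar> \<le> \<bar>Fr 0 0\<bar> + c * (C1 + C2)" by linarith
  qed
  moreover have "\<forall>xs ys. length xs = length (ts1@ts2) \<longrightarrow> length ys = length (ts1@ts2) \<longrightarrow>
          \<bar>\<phi> xs - \<phi> ys\<bar> \<le> (c * M) * (\<Sum>i<length (ts1@ts2). norm (xs!i - ys!i))"
  proof (intro allI impI)
    fix xs ys :: "(real^'d) list" assume lx: "length xs = length (ts1@ts2)" and ly: "length ys = length (ts1@ts2)"
    define s1 where "s1 = (\<Sum>i<n1. norm (xs!i - ys!i))"
    define s2 where "s2 = (\<Sum>i<n2. norm (xs!(n1+i) - ys!(n1+i)))"
    have s1n: "s1 \<ge> 0" "s2 \<ge> 0" unfolding s1_def s2_def by (auto intro: sum_nonneg)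
    have t1: "\<bar>\<phi>1 (take n1 xs) - \<phi>1 (take n1 ys)\<bar> \<le> L1 * s1"
      using lip1[rule_format, of "take n1 xs" "take n1 ys"] lx ly by (simp add: n1_def s1_def)
    have t2: "\<bar>\<phi>2 (drop n1 xs) - \<phi>2 (drop n1 ys)\<bar> \<le> L2 * s2"
      using lip2[rule_format, of "drop n1 xs" "drop n1 ys"] lx ly by (simp add: n1_def n2_def s2_def)
    have "L1 * s1 \<le> M * s1" "L2 * s2 \<le> M * s2" using s1n unfolding M_def
      by (auto intro: mult_right_mono)
    have "\<bar>\<phi> xs - \<phi> ys\<bar> \<le> c * (\<bar>\<phi>1 (take n1 xs) - \<phi>1 (take n1 ys)\<bar> + \<bar>\<phi>2 (drop n1 xs) - \<phi>2 (drop n1 ys)\<bar>)"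
      unfolding \<phi>_def by (rule FL)
    also have "\<dots> \<le> c * (M * s1 + M * s2)"
      using t1 t2 \<open>L1 * s1 \<le> M * s1\<close> \<open>L2 * s2 \<le> M * s2\<close> assms(3)
      by (intro mult_left_mono) auto
    also have "M * s1 + M * s2 = M * (\<Sum>i<length (ts1@ts2). norm (xs!i - ys!i))"
      unfolding s1_def s2_def n1_def n2_def by (simp add: sum_split_nat distrib_left)
    finally show "\<bar>\<phi> xs - \<phi> ys\<bar> \<le> (c * M) * (\<Sum>i<length (ts1@ts2). norm (xs!i - ys!i))"
      by (simp add: mult.assoc)
  qed
  moreover have "\<forall>\<omega>\<in>Omega. Fr (f \<omega>) (g \<omega>) = \<phi> (map (\<lambda>s. canon s \<omega>) (ts1@ts2))"
    using rep1 rep2 by (simp add: \<phi>_def n1_def)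
  ultimately show ?thesis unfolding lip_cyl_def by blast
qed

lemma lip_cyl_const: "(\<lambda>_. r) \<in> lip_cyl S"
  unfolding lip_cyl_def
  by (rule CollectI, rule exI[of _ "[]"], rule exI[of _ "\<lambda>_. r"], rule exI[of _ "\<bar>r\<bar>"], rule exI[of _ 0]) auto

lemma lip_cyl_mono: "S \<subseteq> S' \<Longrightarrow> lip_cyl S \<subseteq> lip_cyl S'"
  unfolding lip_cyl_def by blast
lemma e2_add: "0 \<le> x \<Longrightarrow> 0 \<le> y \<Longrightarrow> e2ennreal (x + y) = e2ennreal x + e2ennreal y"
  by (cases x; cases y) (auto simp: ennreal_plus)
lemma e2_mult: "0 \<le> a \<Longrightarrow> 0 \<le> x \<Longrightarrow> e2ennreal (ereal a * x) = ennreal a * e2ennreal x"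
proof (cases x)
  case (real r) assume "0 \<le> a" "0 \<le> x" then show ?thesis using real by (simp add: ennreal_mult)
next
  case PInf assume "0 \<le> a" then show ?thesis using PInf
    by (cases "a = 0") (auto simp: ennreal_mult_top)
qed auto
lemma e2ennreal_lin: "0 \<le> a \<Longrightarrow> 0 \<le> b \<Longrightarrow> 0 \<le> x \<Longrightarrow> 0 \<le> y \<Longrightarrow>
   e2ennreal (ereal a * x + ereal b * y) = ennreal a * e2ennreal x + ennreal b * e2ennreal y"
  by (subst e2_add) (auto simp: e2_mult)

lemma rep_P: "rep_family PP \<Longrightarrow> P \<in> PP \<Longrightarrow> prob_space P \<and> sets P = sets (Filt {0..}) \<and> space P = Omega"
  unfolding rep_family_def by blast

lemma Ehat_bound:
  fixes G H F :: "'d::finite path \<Rightarrow> ereal"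
  assumes rep: "rep_family PP" and Gm: "G \<in> borel_measurable (Filt {0..})"
    and Hm: "H \<in> borel_measurable (Filt {0..})" and a: "a \<ge> 0" and b: "b \<ge> 0"
    and le: "\<And>\<omega>. \<omega> \<in> Omega \<Longrightarrow> \<bar>F \<omega>\<bar> \<le> ereal a * \<bar>G \<omega>\<bar> + ereal b * \<bar>H \<omega>\<bar>"
  shows "Ehat_abs PP F \<le> ennreal a * Ehat_abs PP G + ennreal b * Ehat_abs PP H"
  unfolding Ehat_abs_def
proof (rule SUP_least)
  fix P assume P: "P \<in> PP"
  have sP: "sets P = sets (Filt {0..})" "space P = Omega" using rep_P[OF rep P] by auto
  have Gm': "G \<in> borel_measurable P" "H \<in> borel_measurable P"
    using Gm Hm measurable_cong_sets[OF sP(1) refl] by auto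
  have "(\<integral>\<^sup>+ \<omega>. e2ennreal \<bar>F \<omega>\<bar> \<partial>P) \<le> (\<integral>\<^sup>+ \<omega>. ennreal a * e2ennreal \<bar>G \<omega>\<bar> + ennreal b * e2ennreal \<bar>H \<omega>\<bar> \<partial>P)"
  proof (rule nn_integral_mono)
    fix \<omega> assume "\<omega> \<in> space P"
    then have "e2ennreal \<bar>F \<omega>\<bar> \<le> e2ennreal (ereal a * \<bar>G \<omega>\<bar> + ereal b * \<bar>H \<omega>\<bar>)"
      using le sP by (intro e2ennreal_mono) auto
    also have "\<dots> = ennreal a * e2ennreal \<bar>G \<omega>\<bar> + ennreal b * e2ennreal \<bar>H \<omega>\<bar>"
      using a b by (intro e2ennreal_lin) auto
    finally show "e2ennreal \<bar>F \<omega>\<bar> \<le> ennreal a * e2ennreal \<bar>G \<omega>\<bar> + ennreal b * e2ennreal \<bar>H \<omega>\<bar>" .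
  qed
  also have "\<dots> = ennreal a * (\<integral>\<^sup>+ \<omega>. e2ennreal \<bar>G \<omega>\<bar> \<partial>P) + ennreal b * (\<integral>\<^sup>+ \<omega>. e2ennreal \<bar>H \<omega>\<bar> \<partial>P)"
    using Gm' by (simp add: nn_integral_add nn_integral_cmult)
  also have "\<dots> \<le> ennreal a * (SUP P\<in>PP. \<integral>\<^sup>+ \<omega>. e2ennreal \<bar>G \<omega>\<bar> \<partial>P) + ennreal b * (SUP P\<in>PP. \<integral>\<^sup>+ \<omega>. e2ennreal \<bar>H \<omega>\<bar> \<partial>P)"
    using P by (intro add_mono mult_left_mono SUP_upper) auto
  finally show "(\<integral>\<^sup>+ \<omega>. e2ennreal \<bar>F \<omega>\<bar> \<partial>P) \<le> ennreal a * (SUP P\<in>PP. \<integral>\<^sup>+ \<omega>. e2ennreal \<bar>G \<omega>\<bar> \<partial>P) + ennreal b * (SUP P\<in>PP. \<integral>\<^sup>+ \<omega>. e2ennreal \<bar>H \<omega>\<bar> \<partial>P)" .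
qed
lemma L1G_binop:
  fixes X Y :: "'d::finite path \<Rightarrow> ereal" and F :: "ereal \<Rightarrow> ereal \<Rightarrow> ereal"
  assumes rep: "rep_family PP" and X: "X \<in> L1G PP S" and Y: "Y \<in> L1G PP S"
    and Fm: "(\<lambda>\<omega>. F (X \<omega>) (Y \<omega>)) \<in> L0 {0..}"
    and c: "c \<ge> 0"
    and Fl: "\<And>x y u v. \<bar>F x y - ereal (Fr u v)\<bar> \<le> ereal c * \<bar>x - ereal u\<bar> + ereal c * \<bar>y - ereal v\<bar>"
    and FL: "\<And>a b a' b'. \<bar>Fr a b - Fr a' b'\<bar> \<le> c * (\<bar>a - a'\<bar> + \<bar>b - b'\<bar>)"
  shows "(\<lambda>\<omega>. F (X \<omega>) (Y \<omega>)) \<in> L1G PP S"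
proof -
  obtain Xn where Xn: "\<And>n. Xn n \<in> lip_cyl S" and Xc: "(\<lambda>n. Ehat_abs PP (\<lambda>\<omega>. X \<omega> - ereal (Xn n \<omega>))) \<longlonglongrightarrow> 0"
    and Xm: "X \<in> L0 {0..}"
    using X unfolding L1G_def by blast
  obtain Yn where Yn: "\<And>n. Yn n \<in> lip_cyl S" and Yc: "(\<lambda>n. Ehat_abs PP (\<lambda>\<omega>. Y \<omega> - ereal (Yn n \<omega>))) \<longlonglongrightarrow> 0"
    and Ym: "Y \<in> L0 {0..}"
    using Y unfolding L1G_def by blast
  define Zn where "Zn n \<omega> = Fr (Xn n \<omega>) (Yn n \<omega>)" for n \<omega>
  have Zn: "Zn n \<in> lip_cyl S" for n
    unfolding Zn_def by (rule lip_cyl_binop[OF Xn Yn c FL])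
  have b: "Ehat_abs PP (\<lambda>\<omega>. F (X \<omega>) (Y \<omega>) - ereal (Zn n \<omega>)) \<le>
     ennreal c * Ehat_abs PP (\<lambda>\<omega>. X \<omega> - ereal (Xn n \<omega>)) + ennreal c * Ehat_abs PP (\<lambda>\<omega>. Y \<omega> - ereal (Yn n \<omega>))" for n
  proof (rule Ehat_bound[OF rep _ _ c c])
    show "(\<lambda>\<omega>. X \<omega> - ereal (Xn n \<omega>)) \<in> borel_measurable (Filt {0..})"
      using Xm lip_cyl_meas[OF Xn] unfolding L0_def by measurable
    show "(\<lambda>\<omega>. Y \<omega> - ereal (Yn n \<omega>)) \<in> borel_measurable (Filt {0..})"
      using Ym lip_cyl_meas[OF Yn] unfolding L0_def by measurable
  qed (simp add: Zn_def Fl)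
  have "(\<lambda>n. ennreal c * Ehat_abs PP (\<lambda>\<omega>. X \<omega> - ereal (Xn n \<omega>)) + ennreal c * Ehat_abs PP (\<lambda>\<omega>. Y \<omega> - ereal (Yn n \<omega>)))
      \<longlonglongrightarrow> ennreal c * 0 + ennreal c * 0"
    by (rule tendsto_add[OF ennreal_tendsto_cmult[OF _ Xc] ennreal_tendsto_cmult[OF _ Yc]]) simp_all
  then have g0: "(\<lambda>n. ennreal c * Ehat_abs PP (\<lambda>\<omega>. X \<omega> - ereal (Xn n \<omega>)) + ennreal c * Ehat_abs PP (\<lambda>\<omega>. Y \<omega> - ereal (Yn n \<omega>)))
      \<longlonglongrightarrow> 0" by simp
  have "(\<lambda>n. Ehat_abs PP (\<lambda>\<omega>. F (X \<omega>) (Y \<omega>) - ereal (Zn n \<omega>))) \<longlonglongrightarrow> 0"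
  proof (rule tendsto_sandwich[OF _ _ tendsto_const g0])
    show "\<forall>\<^sub>F n in sequentially. 0 \<le> Ehat_abs PP (\<lambda>\<omega>. F (X \<omega>) (Y \<omega>) - ereal (Zn n \<omega>))"
      by (rule always_eventually) simp
    show "\<forall>\<^sub>F n in sequentially. Ehat_abs PP (\<lambda>\<omega>. F (X \<omega>) (Y \<omega>) - ereal (Zn n \<omega>)) \<le>
       ennreal c * Ehat_abs PP (\<lambda>\<omega>. X \<omega> - ereal (Xn n \<omega>)) + ennreal c * Ehat_abs PP (\<lambda>\<omega>. Y \<omega> - ereal (Yn n \<omega>))"
      by (rule always_eventually, rule allI, rule b)
  qed
  then show ?thesis unfolding L1G_def using Fm Zn by blast
qed
lemma ineq_min: "\<bar>min x y - ereal (min u v)\<bar> \<le> ereal 1 * \<bar>x - ereal u\<bar> + ereal 1 * \<bar>y - ereal v\<bar>"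
proof (cases x)
  case (real a) then show ?thesis by (cases y) (auto simp: min_def)
next
  case PInf then show ?thesis by (cases y) (auto simp: min_def)
next
  case MInf then show ?thesis by (cases y) (auto simp: min_def)
qed
lemma ineq_cmult: "0 \<le> r \<Longrightarrow> \<bar>ereal r * x - ereal (r * u)\<bar> \<le> ereal r * \<bar>x - ereal u\<bar> + ereal r * \<bar>y - ereal v\<bar>"
proof -
  assume r: "0 \<le> r"
  have "\<bar>ereal r * x - ereal (r * u)\<bar> = ereal r * \<bar>x - ereal u\<bar>"
  proof (cases x)
    case (real a) then show ?thesis using r by (simp add: abs_mult right_diff_distrib[symmetric])
  next
    case PInf then show ?thesis using r by (cases "r = 0") auto
  next
    case MInf then show ?thesis using r by (cases "r = 0") auto
  qed
  moreover have "0 \<le> ereal r * \<bar>y - ereal v\<bar>" using r by simp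
  ultimately show ?thesis by (simp add: add_increasing2)
qed

lemma ineq_add: "\<bar>x + y - ereal (u + v)\<bar> \<le> ereal 1 * \<bar>x - ereal u\<bar> + ereal 1 * \<bar>y - ereal v\<bar>"
proof (cases x)
  case (real a) then show ?thesis by (cases y) auto
qed auto

lemma L1G_add: "rep_family PP \<Longrightarrow> X \<in> L1G PP S \<Longrightarrow> Y \<in> L1G PP S \<Longrightarrow> (\<lambda>\<omega>. X \<omega> + Y \<omega>) \<in> L1G PP S"
  by (rule L1G_binop[where F="(+)" and Fr="(+)" and c=1, OF _ _ _ _ _ ineq_add])
     (auto simp: L0_def L1G_def)

lemma L1G_min: "rep_family PP \<Longrightarrow> X \<in> L1G PP S \<Longrightarrow> Y \<in> L1G PP S \<Longrightarrow> (\<lambda>\<omega>. min (X \<omega>) (Y \<omega>)) \<in> L1G PP S"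
  by (rule L1G_binop[where F="min" and Fr="min" and c=1, OF _ _ _ _ _ ineq_min])
     (auto simp: L0_def L1G_def min_def)

lemma L1G_cmult: "rep_family PP \<Longrightarrow> X \<in> L1G PP S \<Longrightarrow> r \<ge> 0 \<Longrightarrow> (\<lambda>\<omega>. ereal r * X \<omega>) \<in> L1G PP S"
  by (rule L1G_binop[where Y=X and F="\<lambda>x y. ereal r * x" and Fr="\<lambda>u v. r * u" and c=r])
     (auto simp: L0_def L1G_def ineq_cmult abs_mult right_diff_distrib[symmetric] intro: mult_left_mono)

lemma Ehat_zero: "(\<And>\<omega>. X \<omega> = 0) \<Longrightarrow> Ehat_abs PP X = 0"
  unfolding Ehat_abs_def by (cases "PP = {}") (simp_all add: bot_ennreal)

lemma L1G_zero: "(\<lambda>_. 0) \<in> L1G PP S"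
  unfolding L1G_def L0_def
  by (auto intro!: exI[of _ "\<lambda>_ _. 0"] lip_cyl_const simp: Ehat_zero zero_ereal_def)

lemma L1G_mono: "S \<subseteq> S' \<Longrightarrow> L1G PP S \<subseteq> L1G PP S'"
  unfolding L1G_def using lip_cyl_mono by blast

lemma L1G_sum: assumes "rep_family PP" "finite A" "\<And>k. k \<in> A \<Longrightarrow> f k \<in> L1G PP S"
  shows "(\<lambda>\<omega>. \<Sum>k\<in>A. f k \<omega>) \<in> L1G PP S"
  using assms(2,3)
proof (induct A rule: finite_induct)
  case empty then show ?case using L1G_zero by simp
next
  case (insert a A)
  then show ?case using L1G_add[OF assms(1), of "f a" S "\<lambda>\<omega>. \<Sum>k\<in>A. f k \<omega>"] by simp
qed

primrec minupto :: "(nat \<Rightarrow> 'a \<Rightarrow> ereal) \<Rightarrow> nat \<Rightarrow> 'a \<Rightarrow> ereal" where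
  "minupto V 0 = V 0"
| "minupto V (Suc m) = (\<lambda>\<omega>. min (minupto V m \<omega>) (V (Suc m) \<omega>))"

lemma L1G_minupto: "rep_family PP \<Longrightarrow> (\<And>n. n \<le> m \<Longrightarrow> V n \<in> L1G PP S) \<Longrightarrow> minupto V m \<in> L1G PP S"
  by (induct m) (auto intro: L1G_min)

lemma minupto_le: "n \<le> m \<Longrightarrow> minupto V m \<omega> \<le> V n \<omega>"
  by (induct m) (auto simp: le_Suc_eq min.coboundedI1)

lemma minupto_ge: "(\<And>n. n \<le> m \<Longrightarrow> a \<le> V n \<omega>) \<Longrightarrow> a \<le> minupto V m \<omega>"
  by (induct m) auto
lemma cap_zero_iff: "cap PP N = 0 \<longleftrightarrow> (\<forall>P\<in>PP. emeasure P N = 0)"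
  unfolding cap_def bot_ennreal[symmetric] by simp

lemma qs_countable:
  assumes rep: "rep_family PP" and q: "\<And>i::nat. qs PP (Q i)"
  shows "qs PP (\<lambda>\<omega>. \<forall>i. Q i \<omega>)"
proof -
  have "\<forall>i. \<exists>N. N \<in> sets (Filt {0..}) \<and> cap PP N = 0 \<and> (\<forall>\<omega>\<in>Omega - N. Q i \<omega>)"
    using q unfolding qs_def by blast
  then obtain N where N: "\<And>i. N i \<in> sets (Filt {0..})" "\<And>i. cap PP (N i) = 0"
    "\<And>i. \<forall>\<omega>\<in>Omega - N i. Q i \<omega>"
    by metis
  have "(\<Union>i. N i) \<in> sets (Filt {0..})" using N(1) by auto
  moreover have "cap PP (\<Union>i. N i) = 0"
    unfolding cap_zero_iff
  proof
    fix P assume P: "P \<in> PP"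
    have sP: "sets P = sets (Filt {0..})" using rep_P[OF rep P] by auto
    have e: "\<And>i. emeasure P (N i) = 0" using N(2) P by (simp add: cap_zero_iff)
    show "emeasure P (\<Union>i. N i) = 0"
      by (rule emeasure_UN_eq_0) (use N(1) e sP in auto)
  qed
  moreover have "\<forall>\<omega>\<in>Omega - (\<Union>i. N i). \<forall>i. Q i \<omega>" using N(3) by blast
  ultimately show ?thesis unfolding qs_def by blast
qed

lemma qs_mono: "qs PP Q \<Longrightarrow> (\<And>\<omega>. \<omega> \<in> Omega \<Longrightarrow> Q \<omega> \<Longrightarrow> R \<omega>) \<Longrightarrow> qs PP R"
  unfolding qs_def by blast

lemma count_lemma:
  fixes x h :: real
  assumes h: "h > 0" and x0: "x \<ge> 0"
  shows "(\<Sum>k<N. (if real k * h \<le> x then 1 else 0::real)) = real (min N (nat \<lfloor>x / h\<rfloor> + 1))"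
proof (induct N)
  case 0 then show ?case by simp
next
  case (Suc N)
  have "real N * h \<le> x \<longleftrightarrow> real N \<le> x / h" using h by (simp add: le_divide_eq)
  also have "\<dots> \<longleftrightarrow> int N \<le> \<lfloor>x / h\<rfloor>" by (simp add: le_floor_iff)
  also have "\<dots> \<longleftrightarrow> N < nat \<lfloor>x / h\<rfloor> + 1"
  proof -
    have "0 \<le> \<lfloor>x / h\<rfloor>" using x0 h by simp
    then show ?thesis by (auto simp: le_nat_iff[symmetric] less_Suc_eq_le)
  qed
  finally have e: "real N * h \<le> x \<longleftrightarrow> N < nat \<lfloor>x / h\<rfloor> + 1" .
  show ?case using Suc e by (auto simp: min_def)
qed

lemma riemann_bounds:
  fixes h x T :: real and N :: nat
  assumes h: "h > 0" and x: "x \<ge> 0" and NT: "real N * h = T"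
  shows "min x T \<le> (\<Sum>k<N. h * (if real k * h \<le> x then 1 else 0))"
    and "(\<Sum>k<N. h * (if real k * h \<le> x then 1 else 0)) \<le> min x T + h"
proof -
  define m where "m = nat \<lfloor>x / h\<rfloor> + 1"
  have s: "(\<Sum>k<N. h * (if real k * h \<le> x then 1 else 0)) = h * real (min N m)"
    using count_lemma[OF h x, of N] by (simp add: sum_distrib_left[symmetric] m_def)
  have fl: "real_of_int \<lfloor>x / h\<rfloor> \<le> x / h" "x / h < real_of_int \<lfloor>x / h\<rfloor> + 1" by linarith+
  have "0 \<le> \<lfloor>x / h\<rfloor>" using x h by simp
  then have rm: "real m = real_of_int \<lfloor>x / h\<rfloor> + 1" unfolding m_def by simp
  have m1: "x < h * real m"
  proof -
    have "h * (x / h) < h * real m" using fl(2) h rm by (intro mult_strict_left_mono) auto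
    then show ?thesis using h by simp
  qed
  have m2: "h * real m \<le> x + h" using fl(1) h unfolding rm by (simp add: le_divide_eq distrib_left mult.commute)
  have hm: "h * real (min N m) = min T (h * real m)"
  proof (cases "N \<le> m")
    case True
    then have "h * real N \<le> h * real m" using h by (intro mult_left_mono) auto
    then show ?thesis using True NT by (simp add: min_def mult.commute)
  next
    case False
    then have "h * real m \<le> h * real N" using h by (intro mult_left_mono) auto
    then show ?thesis using False NT by (simp add: min_def mult.commute)
  qed
  show "min x T \<le> (\<Sum>k<N. h * (if real k * h \<le> x then 1 else 0))"
    unfolding s hm using m1 by linarith
  show "(\<Sum>k<N. h * (if real k * h \<le> x then 1 else 0)) \<le> min x T + h"
    unfolding s hm using m2 h by linarith
qed

lemma tendsto_sum_ereal:
  assumes "finite A" "\<And>k. k \<in> A \<Longrightarrow> (\<lambda>m. f k m) \<longlonglongrightarrow> ereal (r k)"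
  shows "(\<lambda>m. \<Sum>k\<in>A. f k m) \<longlonglongrightarrow> ereal (\<Sum>k\<in>A. r k)"
  using assms
proof (induct A rule: finite_induct)
  case empty then show ?case by (simp add: zero_ereal_def)
next
  case (insert a A)
  have "(\<lambda>m. f a m + (\<Sum>k\<in>A. f k m)) \<longlonglongrightarrow> ereal (r a) + ereal (\<Sum>k\<in>A. r k)"
    by (rule tendsto_add_ereal) (use insert in auto)
  then show ?case using insert by simp
qed
lemma part1:
  fixes PP :: "'d::finite path measure set" and \<tau> :: "'d path \<Rightarrow> real"
  assumes rep: "rep_family PP" and st: "star_stopping_time PP \<tau>" and T: "T > 0"
  shows "(\<lambda>\<omega>. ereal (min (\<tau> \<omega>) T)) \<in> L1G_star PP {0..}"
proof -
  have nonneg: "\<And>\<omega>. \<omega> \<in> Omega \<Longrightarrow> 0 \<le> \<tau> \<omega>" using st unfolding star_stopping_time_def by blast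
  define I where "I = (\<lambda>t \<omega>. if t \<le> \<tau> \<omega> then (1::ereal) else 0)"
  have Ist: "I t \<in> L1G_star PP {0..t}" if "t \<ge> 0" for t
    using st that unfolding star_stopping_time_def I_def by auto
  have "\<forall>t. \<exists>Z. t \<ge> 0 \<longrightarrow> (\<forall>m. Z m \<in> L1G PP {0..t}) \<and> dec_qs PP Z (I t)"
    using Ist unfolding L1G_star_def by blast
  then obtain Z where Z: "\<And>t m. t \<ge> 0 \<Longrightarrow> Z t m \<in> L1G PP {0..t}" "\<And>t. t \<ge> 0 \<Longrightarrow> dec_qs PP (Z t) (I t)"
    by metis
  have Im: "I t \<in> borel_measurable (Filt {0..})" if "t \<ge> 0" for t
  proof -
    have "I t \<in> L0 {0..t}" using Ist[OF that] unfolding L1G_star_def LL1_def by auto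
    then have "I t \<in> L0 {0..}" using L0_mono[of "{0..t}" "{0..}"] by auto
    then show ?thesis unfolding L0_def .
  qed
  define h where "h = (\<lambda>n::nat. T / 2^n)"
  define tt where "tt = (\<lambda>n k::nat. real k * h n)"
  define yr where "yr = (\<lambda>n \<omega>. (\<Sum>k<2^n. h n * real_of_ereal (I (tt n k) \<omega>)))"
  define V where "V = (\<lambda>n m \<omega>. (\<Sum>k<2^n. ereal (h n) * Z (tt n k) m \<omega>))"
  define W where "W = (\<lambda>m. minupto (\<lambda>n. V n m) m)"
  define X where "X = (\<lambda>\<omega>. ereal (min (\<tau> \<omega>) T))"
  have hpos: "h n > 0" for n unfolding h_def using T by simp
  have tt0: "tt n k \<ge> 0" for n k unfolding tt_def using hpos[of n] by simp
  have NT: "real (2^n) * h n = T" for n unfolding h_def by simp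
  have yr_eq: "yr n \<omega> = (\<Sum>k<2^n. h n * (if real k * h n \<le> \<tau> \<omega> then 1 else 0))" for n \<omega>
    unfolding yr_def I_def tt_def by (intro sum.cong) auto
  have yb: "min (\<tau> \<omega>) T \<le> yr n \<omega> \<and> yr n \<omega> \<le> min (\<tau> \<omega>) T + h n" if "\<omega> \<in> Omega" for n \<omega>
    unfolding yr_eq using riemann_bounds[OF hpos nonneg[OF that] NT] by auto
  have hlim: "h \<longlonglongrightarrow> 0" unfolding h_def by (rule LIMSEQ_divide_realpow_zero) simp
  have ylim: "(\<lambda>n. yr n \<omega>) \<longlonglongrightarrow> min (\<tau> \<omega>) T" if "\<omega> \<in> Omega" for \<omega>
  proof -
    have "(\<lambda>n. yr n \<omega> - min (\<tau> \<omega>) T) \<longlonglongrightarrow> 0"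
    proof (rule Lim_null_comparison)
      show "\<forall>\<^sub>F n in sequentially. norm (yr n \<omega> - min (\<tau> \<omega>) T) \<le> h n"
      proof (intro always_eventually allI)
        fix n
        show "norm (yr n \<omega> - min (\<tau> \<omega>) T) \<le> h n"
          using yb[OF that, of n] unfolding real_norm_def abs_le_iff by linarith
      qed
    qed (rule hlim)
    then have "(\<lambda>n. (yr n \<omega> - min (\<tau> \<omega>) T) + min (\<tau> \<omega>) T) \<longlonglongrightarrow> 0 + min (\<tau> \<omega>) T"
      by (intro tendsto_add) auto
    then show ?thesis by simp
  qed
  have yrm: "yr n \<in> borel_measurable (Filt {0..})" for n
  proof -
    have "\<And>k. (\<lambda>\<omega>. real_of_ereal (I (tt n k) \<omega>)) \<in> borel_measurable (Filt {0..})"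
      using Im[OF tt0] by measurable
    then show ?thesis unfolding yr_def by measurable
  qed
  have Xm: "X \<in> borel_measurable (Filt {0..})"
  proof -
    have "(\<lambda>\<omega>. min (\<tau> \<omega>) T) \<in> borel_measurable (Filt {0..})"
      by (rule borel_measurable_LIMSEQ_real[OF ylim yrm]) (simp add: space_Filt)
    then show ?thesis unfolding X_def by measurable
  qed
  have XE: "Ehat_abs PP X < \<infinity>"
  proof -
    have "Ehat_abs PP X \<le> ennreal T"
      unfolding Ehat_abs_def
    proof (rule SUP_least)
      fix P assume P: "P \<in> PP"
      have pP: "prob_space P" "space P = Omega" using rep_P[OF rep P] by auto
      have "(\<integral>\<^sup>+ \<omega>. e2ennreal \<bar>X \<omega>\<bar> \<partial>P) \<le> (\<integral>\<^sup>+ \<omega>. ennreal T \<partial>P)"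
      proof (intro nn_integral_mono)
        fix \<omega> assume "\<omega> \<in> space P"
        then have "0 \<le> \<tau> \<omega>" using nonneg pP(2) by auto
        then have "\<bar>X \<omega>\<bar> = ereal (min (\<tau> \<omega>) T)" using T unfolding X_def by simp
        then show "e2ennreal \<bar>X \<omega>\<bar> \<le> ennreal T" by (metis e2ennreal_ereal ennreal_leI min.cobounded2)
      qed
      also have "\<dots> = ennreal T" using prob_space.emeasure_space_1[OF pP(1)] by simp
      finally show "(\<integral>\<^sup>+ \<omega>. e2ennreal \<bar>X \<omega>\<bar> \<partial>P) \<le> ennreal T" .
    qed
    then show ?thesis using le_less_trans by fastforce
  qed
  have WL: "W m \<in> L1G PP {0..}" for m
    unfolding W_def
  proof (rule L1G_minupto[OF rep])
    fix n
    show "V n m \<in> L1G PP {0..}" unfolding V_def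
    proof (rule L1G_sum[OF rep], simp)
      fix k
      have "Z (tt n k) m \<in> L1G PP {0..}" using Z(1)[OF tt0, of n k m] L1G_mono[of "{0..tt n k}" "{0..}" PP] by auto
      then show "(\<lambda>\<omega>. ereal (h n) * Z (tt n k) m \<omega>) \<in> L1G PP {0..}"
        using L1G_cmult[OF rep _ less_imp_le[OF hpos]] by blast
    qed
  qed
  define Q where "Q = (\<lambda>(p::nat\<times>nat) \<omega>. (\<forall>m. Z (tt (fst p) (snd p)) (Suc m) \<omega> \<le> Z (tt (fst p) (snd p)) m \<omega>) \<and>
        (\<lambda>m. Z (tt (fst p) (snd p)) m \<omega>) \<longlonglongrightarrow> I (tt (fst p) (snd p)) \<omega>)"
  have Qp: "qs PP (Q p)" for p
    using Z(2)[OF tt0, of "fst p" "snd p"] unfolding dec_qs_def Q_def by simp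
  have "qs PP (\<lambda>\<omega>. \<forall>i. Q (prod_decode i) \<omega>)"
    by (rule qs_countable[OF rep], rule Qp)
  then have G0: "qs PP (\<lambda>\<omega>. \<forall>p. Q p \<omega>)"
  proof (rule qs_mono)
    fix \<omega> assume a: "\<forall>i. Q (prod_decode i) \<omega>"
    show "\<forall>p. Q p \<omega>"
    proof
      fix p show "Q p \<omega>" using a[rule_format, of "prod_encode p"] by (simp only: prod_encode_inverse)
    qed
  qed
  have G: "qs PP (\<lambda>\<omega>. \<forall>n k. (\<forall>m. Z (tt n k) (Suc m) \<omega> \<le> Z (tt n k) m \<omega>) \<and>
        (\<lambda>m. Z (tt n k) m \<omega>) \<longlonglongrightarrow> I (tt n k) \<omega>)"
  proof (rule qs_mono[OF G0])
    fix \<omega> assume a: "\<forall>p. Q p \<omega>"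
    show "\<forall>n k. (\<forall>m. Z (tt n k) (Suc m) \<omega> \<le> Z (tt n k) m \<omega>) \<and>
        (\<lambda>m. Z (tt n k) m \<omega>) \<longlonglongrightarrow> I (tt n k) \<omega>"
    proof (intro allI)
      fix n k show "(\<forall>m. Z (tt n k) (Suc m) \<omega> \<le> Z (tt n k) m \<omega>) \<and>
        (\<lambda>m. Z (tt n k) m \<omega>) \<longlonglongrightarrow> I (tt n k) \<omega>"
        using a[rule_format, of "(n,k)"] unfolding Q_def by simp
    qed
  qed
  have "qs PP (\<lambda>\<omega>. (\<forall>m. W (Suc m) \<omega> \<le> W m \<omega>) \<and> (\<lambda>m. W m \<omega>) \<longlonglongrightarrow> X \<omega>)"
  proof (rule qs_mono[OF G])
    fix \<omega> assume om: "\<omega> \<in> Omega" and g: "\<forall>n k. (\<forall>m. Z (tt n k) (Suc m) \<omega> \<le> Z (tt n k) m \<omega>) \<and>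
        (\<lambda>m. Z (tt n k) m \<omega>) \<longlonglongrightarrow> I (tt n k) \<omega>"
    have Zge: "I (tt n k) \<omega> \<le> Z (tt n k) m \<omega>" for n k m
      using g by (intro decseq_ge[of "\<lambda>m. Z (tt n k) m \<omega>"]) (auto simp: decseq_Suc_iff)
    have Ieq: "ereal (h n) * I (tt n k) \<omega> = ereal (h n * real_of_ereal (I (tt n k) \<omega>))" for n k
      unfolding I_def by simp
    have Vmono: "V n (Suc m) \<omega> \<le> V n m \<omega>" for n m
      unfolding V_def using g hpos by (intro sum_mono ereal_mult_left_mono) (auto intro: less_imp_le)
    have Vge: "ereal (yr n \<omega>) \<le> V n m \<omega>" for n m
    proof -
      have "ereal (yr n \<omega>) = (\<Sum>k<2^n. ereal (h n) * I (tt n k) \<omega>)"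
        unfolding yr_def Ieq by simp
      also have "\<dots> \<le> V n m \<omega>"
        unfolding V_def using Zge hpos by (intro sum_mono ereal_mult_left_mono) (auto intro: less_imp_le)
      finally show ?thesis .
    qed
    have Vlim: "(\<lambda>m. V n m \<omega>) \<longlonglongrightarrow> ereal (yr n \<omega>)" for n
      unfolding V_def yr_def
    proof (rule tendsto_sum_ereal, simp)
      fix k
      have "(\<lambda>m. ereal (h n) * Z (tt n k) m \<omega>) \<longlonglongrightarrow> ereal (h n) * I (tt n k) \<omega>"
        using g by (intro tendsto_cmult_ereal) auto
      then show "(\<lambda>m. ereal (h n) * Z (tt n k) m \<omega>) \<longlonglongrightarrow> ereal (h n * real_of_ereal (I (tt n k) \<omega>))"
        unfolding Ieq .
    qed
    have Wdec: "W (Suc m) \<omega> \<le> W m \<omega>" for m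
    proof -
      have "W (Suc m) \<omega> \<le> minupto (\<lambda>n. V n (Suc m)) m \<omega>" unfolding W_def by simp
      also have "\<dots> \<le> minupto (\<lambda>n. V n m) m \<omega>"
      proof (rule minupto_ge)
        fix n assume nm: "n \<le> m"
        have "minupto (\<lambda>n. V n (Suc m)) m \<omega> \<le> V n (Suc m) \<omega>" using minupto_le[OF nm, of "\<lambda>n. V n (Suc m)" \<omega>] by simp
        then show "minupto (\<lambda>n. V n (Suc m)) m \<omega> \<le> V n m \<omega>" using Vmono[of n m] by (rule order_trans)
      qed
      finally show ?thesis unfolding W_def .
    qed
    have Wge: "X \<omega> \<le> W m \<omega>" for m
      unfolding W_def
    proof (rule minupto_ge)
      fix n
      have "min (\<tau> \<omega>) T \<le> yr n \<omega>" using yb[OF om, of n] by simp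
      then have "X \<omega> \<le> ereal (yr n \<omega>)" unfolding X_def by (metis ereal_less_eq(3))
      then show "X \<omega> \<le> V n m \<omega>" using Vge[of n m] by (rule order_trans)
    qed
    have WI: "(\<lambda>m. W m \<omega>) \<longlonglongrightarrow> (INF m. W m \<omega>)"
      by (rule LIMSEQ_INF) (simp add: decseq_Suc_iff Wdec)
    have "(INF m. W m \<omega>) \<le> ereal (yr n \<omega>)" for n
    proof (rule LIMSEQ_le_const[OF Vlim], intro exI allI impI)
      fix m assume "n \<le> m"
      then have "W m \<omega> \<le> V n m \<omega>" unfolding W_def by (rule minupto_le)
      then show "(INF m. W m \<omega>) \<le> V n m \<omega>" using INF_lower[of m UNIV "\<lambda>m. W m \<omega>"] by auto
    qed
    moreover have "(\<lambda>n. ereal (yr n \<omega>)) \<longlonglongrightarrow> X \<omega>"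
      unfolding X_def lim_ereal by (rule ylim[OF om])
    ultimately have "(INF m. W m \<omega>) \<le> X \<omega>"
      by (intro LIMSEQ_le_const[of "\<lambda>n. ereal (yr n \<omega>)"]) auto
    moreover have "X \<omega> \<le> (INF m. W m \<omega>)" using Wge by (auto intro: INF_greatest)
    ultimately have "(INF m. W m \<omega>) = X \<omega>" by simp
    then show "(\<forall>m. W (Suc m) \<omega> \<le> W m \<omega>) \<and> (\<lambda>m. W m \<omega>) \<longlonglongrightarrow> X \<omega>"
      using WI Wdec by simp
  qed
  then have "dec_qs PP W X" unfolding dec_qs_def .
  then show ?thesis
    unfolding L1G_star_def LL1_def L0_def X_def[symmetric] using Xm XE WL by blast
qed
theorem proposition3p24:
  fixes PP :: "'d::finite path measure set" and \<tau> :: "'d path \<Rightarrow> real"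
  assumes "rep_family PP"
    and "star_stopping_time PP \<tau>"
  shows "(\<forall>T>0. (\<lambda>\<omega>. ereal (min (\<tau> \<omega>) T)) \<in> L1G_star PP {0..})
         \<and> (\<lambda>\<omega>. ereal (\<tau> \<omega>)) \<in> L1G_starstar PP"
proof -
  have P1: "\<forall>T>0. (\<lambda>\<omega>. ereal (min (\<tau> \<omega>) T)) \<in> L1G_star PP {0..}"
    using part1[OF assms] by blast
  define Xn where "Xn = (\<lambda>n \<omega>. ereal (min (\<tau> \<omega>) (real (Suc n))))"
  have XnS: "Xn n \<in> L1G_star PP {0..}" for n
    unfolding Xn_def using P1 by simp
  have Xnm: "Xn n \<in> borel_measurable (Filt {0..})" for n
    using XnS[of n] unfolding L1G_star_def LL1_def L0_def by auto
  have inc: "Xn n \<omega> \<le> Xn (Suc n) \<omega>" for n \<omega>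
  proof -
    have "min (\<tau> \<omega>) (real (Suc n)) \<le> min (\<tau> \<omega>) (real (Suc (Suc n)))" by (rule min.mono) auto
    then show ?thesis unfolding Xn_def by (metis ereal_less_eq(3))
  qed
  have sup: "(SUP n. Xn n \<omega>) = ereal (\<tau> \<omega>)" for \<omega>
  proof (rule antisym)
    show "(SUP n. Xn n \<omega>) \<le> ereal (\<tau> \<omega>)" unfolding Xn_def by (rule SUP_least) simp
    have "\<tau> \<omega> \<le> real (Suc (nat \<lceil>\<tau> \<omega>\<rceil>))" by linarith
    then have "Xn (nat \<lceil>\<tau> \<omega>\<rceil>) \<omega> = ereal (\<tau> \<omega>)" unfolding Xn_def by simp
    then show "ereal (\<tau> \<omega>) \<le> (SUP n. Xn n \<omega>)" by (metis SUP_upper UNIV_I)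
  qed
  have taum: "(\<lambda>\<omega>. ereal (\<tau> \<omega>)) \<in> borel_measurable (Filt {0..})"
  proof -
    have "(\<lambda>\<omega>. SUP n. Xn n \<omega>) \<in> borel_measurable (Filt {0..})" using Xnm by measurable
    then show ?thesis using sup by simp
  qed
  have lim: "(\<lambda>n. Xn n \<omega>) \<longlonglongrightarrow> ereal (\<tau> \<omega>)" for \<omega>
    using LIMSEQ_SUP[of "\<lambda>n. Xn n \<omega>"] inc sup by (simp add: incseq_Suc_iff)
  have "inc_qs PP Xn (\<lambda>\<omega>. ereal (\<tau> \<omega>))"
    unfolding inc_qs_def qs_def
    by (rule bexI[of _ "{}"]) (auto simp: cap_zero_iff inc lim)
  then have "(\<lambda>\<omega>. ereal (\<tau> \<omega>)) \<in> L1G_starstar PP"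
    unfolding L1G_starstar_def L0_def using taum XnS by blast
  then show ?thesis using P1 by blast
qed
end
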